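(* Let $Q$ be a countable weak-latin quandle and $c$ a circular order on $Q$. Then there is an injective quandle homomorphism $\rho:Q\hookrightarrow\mathrm{Conj}(\mathrm{Homeo}_+(S^1))$, i.e. an injective map with $\rho(r*s)=\rho(s)\circ\rho(r)\circ\rho(s)^{-1}$ for all $r,s\in Q$.
   Context: Quandle: set $Q$ with operation $*$ satisfying $q*q=q$, unique right division, and $(q*r)*s=(q*s)*(r*s)$. $Q$ is weak-latin if for any $q,r\in Q$ there exists $\hat q\in Q$ such that $\hat q*q=\hat q*r$ implies $q=r$. A circular order on $Q$ is $c:Q^3\to\{-1,0,1\}$ with: $c(q_1,q_2,q_3)=0$ iff two entries coincide; $c(q_2,q_3,q_4)-c(q_1,q_3,q_4)+c(q_1,q_2,q_4)-c(q_1,q_2,q_3)=0$; $c(q_1*q,q_2*q,q_3*q)=c(q_1,q_2,q_3)$. Homeomorphisms act on the right; $\mathrm{Conj}(\mathrm{Homeo}_+(S^1))$ is the quandle structure $f*g=g\circ f\circ g^{-1}$ on $\mathrm{Homeo}_+(S^1)$. *)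

theory Defs
  imports "HOL-Analysis.Analysis"
begin

definition quandle :: "'a set \<Rightarrow> ('a \<Rightarrow> 'a \<Rightarrow> 'a) \<Rightarrow> bool" where
  "quandle Q op \<longleftrightarrow>
     (\<forall>q\<in>Q. \<forall>r\<in>Q. op q r \<in> Q) \<and>
     (\<forall>q\<in>Q. op q q = q) \<and>
     (\<forall>q\<in>Q. \<forall>s\<in>Q. \<exists>!r. r \<in> Q \<and> op r s = q) \<and>
     (\<forall>q\<in>Q. \<forall>r\<in>Q. \<forall>s\<in>Q. op (op q r) s = op (op q s) (op r s))"

definition weak_latin :: "'a set \<Rightarrow> ('a \<Rightarrow> 'a \<Rightarrow> 'a) \<Rightarrow> bool" where
  "weak_latin Q op \<longleftrightarrow>
     (\<forall>q\<in>Q. \<forall>r\<in>Q. \<exists>qh\<in>Q. op qh q = op qh r \<longrightarrow> q = r)"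

definition circular_order :: "'a set \<Rightarrow> ('a \<Rightarrow> 'a \<Rightarrow> 'a) \<Rightarrow> ('a \<Rightarrow> 'a \<Rightarrow> 'a \<Rightarrow> int) \<Rightarrow> bool" where
  "circular_order Q op c \<longleftrightarrow>
     (\<forall>q1\<in>Q. \<forall>q2\<in>Q. \<forall>q3\<in>Q. c q1 q2 q3 \<in> {-1, 0, 1}) \<and>
     (\<forall>q1\<in>Q. \<forall>q2\<in>Q. \<forall>q3\<in>Q.
        (c q1 q2 q3 = 0 \<longleftrightarrow> (q1 = q2 \<or> q2 = q3 \<or> q1 = q3))) \<and>
     (\<forall>q1\<in>Q. \<forall>q2\<in>Q. \<forall>q3\<in>Q. \<forall>q4\<in>Q.
        c q2 q3 q4 - c q1 q3 q4 + c q1 q2 q4 - c q1 q2 q3 = 0) \<and>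
     (\<forall>q\<in>Q. \<forall>q1\<in>Q. \<forall>q2\<in>Q. \<forall>q3\<in>Q.
        c (op q1 q) (op q2 q) (op q3 q) = c q1 q2 q3)"

definition S1 :: "complex set" where
  "S1 = sphere 0 1"

text \<open>Standard (counterclockwise) circular order on S1: sign of the orientation
  of the triangle a b c (for points on the circle this is the cyclic order).\<close>
definition circle_orient :: "complex \<Rightarrow> complex \<Rightarrow> complex \<Rightarrow> real" where
  "circle_orient a b c = sgn (Im (cnj (b - a) * (c - a)))"

text \<open>Elements of Homeo_+(S1), represented as functions on the complex plane
  that are the identity off S1 (so that equality and composition are the
  ones of maps of S1).\<close>
definition homeo_plus :: "(complex \<Rightarrow> complex) \<Rightarrow> bool" where
  "homeo_plus f \<longleftrightarrow>
     (\<exists>g. homeomorphism S1 S1 f g) \<and>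
     (\<forall>a\<in>S1. \<forall>b\<in>S1. \<forall>c\<in>S1. circle_orient (f a) (f b) (f c) = circle_orient a b c) \<and>
     (\<forall>x. x \<notin> S1 \<longrightarrow> f x = x)"

definition hinv :: "(complex \<Rightarrow> complex) \<Rightarrow> complex \<Rightarrow> complex" where
  "hinv f = (\<lambda>x. if x \<in> S1 then inv_into S1 f x else x)"

end

theory Submission
  imports Defs
begin


definition cyc :: "real \<Rightarrow> real \<Rightarrow> real \<Rightarrow> real" where
  "cyc a b c = sgn (b - a) * sgn (c - b) * sgn (c - a)"

definition E :: "real \<Rightarrow> complex" where
  "E t = cis (2 * pi * t)"

lemma sin_ident:
  fixes x y :: real shows "sin x + sin y - sin (x + y) = 4 * sin (x/2) * sin (y/2) * sin ((x + y)/2)"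
proof -
  define p where "p = x/2"
  define q where "q = y/2"
  have x: "x = 2*p" and y: "y = 2*q" by (simp_all add: p_def q_def)
  have s: "(x+y)/2 = p + q" by (simp add: p_def q_def add_divide_distrib)
  have e1: "sin x = 2 * sin p * cos p" unfolding x by (simp add: sin_double)
  have e2: "sin y = 2 * sin q * cos q" unfolding y by (simp add: sin_double)
  have e3: "sin (x+y) = 2 * sin p * cos p * (1 - 2 * sin q ^ 2) + (1 - 2 * sin p ^ 2) * (2 * sin q * cos q)"
    unfolding x y by (simp only: sin_add sin_double cos_double_sin)
  have "sin x + sin y - sin (x + y) = 4 * sin p * sin q * (sin p * cos q + cos p * sin q)"
    unfolding e1 e2 e3 by (simp add: algebra_simps power2_eq_square)
  also have "\<dots> = 4 * sin (x/2) * sin (y/2) * sin ((x + y)/2)"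
    unfolding s by (simp add: p_def q_def sin_add)
  finally show ?thesis .
qed

lemma sgn_sin_pi: assumes "\<bar>t\<bar> < 1" shows "sgn (sin (pi * t)) = sgn t"
proof (cases "t > 0")
  case True
  then have "sin (pi*t) > 0" using assms by (intro sin_gt_zero) auto
  then show ?thesis using True by simp
next
  case False
  show ?thesis
  proof (cases "t = 0")
    case True then show ?thesis by simp
  next
    case False
    with \<open>\<not> t > 0\<close> have "t < 0" by simp
    have "pi*(-t) < pi*1" using assms by (intro mult_strict_left_mono) auto
    moreover have "0 < pi*(-t)" using \<open>t<0\<close> by (simp add: mult_pos_neg)
    ultimately have "sin (pi*(-t)) > 0" by (intro sin_gt_zero) auto
    then show ?thesis using \<open>t<0\<close> by simp
  qed
qed

lemma Im_E: "Im (cnj (E b - E a) * (E c - E a))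
   = sin (2*pi*(b-a)) + sin (2*pi*(c-b)) - sin (2*pi*(c-a))"
  by (simp add: E_def cis.sel right_diff_distrib sin_diff algebra_simps)

lemma orient_E:
  assumes "a \<in> {0..<1}" "b \<in> {0..<1}" "c \<in> {0..<1}"
  shows "circle_orient (E a) (E b) (E c) = cyc a b c"
proof -
  have "Im (cnj (E b - E a) * (E c - E a))
     = 4 * sin (pi*(b-a)) * sin (pi*(c-b)) * sin (pi*(c-a))"
  proof -
    have "2*pi*(b-a) + 2*pi*(c-b) = 2*pi*(c-a)" by (simp add: algebra_simps)
    moreover have "2*pi*(b-a)/2 = pi*(b-a)" "2*pi*(c-b)/2 = pi*(c-b)" "2*pi*(c-a)/2 = pi*(c-a)"
      by simp_all
    ultimately show ?thesis unfolding Im_E using sin_ident[of "2*pi*(b-a)" "2*pi*(c-b)"]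
      by (simp add: mult.assoc)
  qed
  then have "circle_orient (E a) (E b) (E c) = sgn (sin (pi*(b-a))) * sgn (sin (pi*(c-b))) * sgn (sin (pi*(c-a)))"
    by (simp add: circle_orient_def sgn_mult)
  also have "\<dots> = cyc a b c"
    using assms by (simp add: cyc_def sgn_sin_pi abs_less_iff)
  finally show ?thesis .
qed


lemma E_S1: "E t \<in> S1"
  by (simp add: S1_def E_def)

lemma E_inj: "inj_on E {0..<1}"
proof (rule inj_onI)
  fix a b :: real assume a: "a \<in> {0..<1}" and b: "b \<in> {0..<1}" and eq: "E a = E b"
  then have "sin (2*pi*a) = sin (2*pi*b) \<and> cos (2*pi*a) = cos (2*pi*b)"
    by (simp add: E_def complex_eq_iff)
  then obtain k :: int where k: "2*pi*a = 2*pi*b + 2*pi*real_of_int k"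
    using sin_cos_eq_iff by blast
  then have "2*pi*a = 2*pi*(b+k)" by (simp add: algebra_simps)
  then have "a = b + k" by simp
  moreover have "\<bar>a - b\<bar> < 1" using a b by auto
  ultimately have "k = 0" by simp
  with \<open>a = b + k\<close> show "a = b" by simp
qed

lemma E_surj: "E ` {0..<1} = S1"
proof
  show "E ` {0..<1} \<subseteq> S1" using E_S1 by auto
next
  show "S1 \<subseteq> E ` {0..<1}"
  proof
    fix z assume z: "z \<in> S1"
    then have nz: "norm z = 1" by (simp add: S1_def)
    then have "z \<noteq> 0" by auto
    then have zc: "z = cis (Arg z)" and r: "- pi < Arg z" "Arg z \<le> pi"
      using Arg_correct[of z] nz by (auto simp: sgn_div_norm)
    define t where "t = (if Arg z \<ge> 0 then Arg z / (2*pi) else Arg z / (2*pi) + 1)"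
    have "t \<in> {0..<1}" using r by (auto simp: t_def field_simps)
    moreover have "E t = z"
    proof (cases "Arg z \<ge> 0")
      case True then show ?thesis using zc by (simp add: E_def t_def)
    next
      case False
      then have "2*pi*t = Arg z + 2*pi" by (simp add: t_def algebra_simps)
      then have "E t = cis (Arg z + 2*pi)" by (simp add: E_def)
      also have "\<dots> = cis (Arg z)" by (simp add: cis_mult[symmetric] )
      finally show ?thesis using zc by simp
    qed
    ultimately show "z \<in> E ` {0..<1}" by blast
  qed
qed

lemma E_bij: "bij_betw E {0..<1} S1"
  using E_inj E_surj by (simp add: bij_betw_def)

lemma arc_formula:
  fixes y z :: complex and u v :: real
  assumes "norm y = 1"
  shows "Im (cnj (z - y * Complex u (-v)) * (y * Complex u v - y * Complex u (-v)))
       = 2 * v * (Re (z * cnj y) - u)"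
proof -
  have h: "Re y ^ 2 + Im y ^ 2 = 1" using assms by (simp add: cmod_def)
  show ?thesis using h by (simp add: algebra_simps power2_eq_square) algebra
qed

lemma dist_formula:
  fixes y z :: complex
  assumes "norm y = 1" "norm z = 1"
  shows "(dist z y)^2 = 2 - 2 * Re (z * cnj y)"
proof -
  have h: "Re y ^ 2 + Im y ^ 2 = 1" "Re z ^ 2 + Im z ^ 2 = 1" using assms by (simp_all add: cmod_def)
  have "(dist z y)^2 = (Re z - Re y)^2 + (Im z - Im y)^2" by (simp add: dist_norm cmod_power2)
  then show ?thesis using h by (simp add: algebra_simps power2_eq_square)
qed

lemma orient_continuous:
  assumes bij: "bij_betw f S1 S1"
    and ori: "\<forall>a\<in>S1. \<forall>b\<in>S1. \<forall>c\<in>S1. circle_orient (f a) (f b) (f c) = circle_orient a b c"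
  shows "continuous_on S1 f"
  unfolding continuous_on_iff
proof (intro ballI allI impI)
  fix p e assume p: "p \<in> S1" and e: "(0::real) < e"
  define e' where "e' = min e 1"
  have e': "0 < e'" "e' \<le> 1" "e' \<le> e" using e by (auto simp: e'_def)
  define u where "u = 1 - e'^2/4"
  define v where "v = sqrt (1 - u^2)"
  have "e'^2 \<le> 1" using e' by (simp add: power_le_one)
  then have u: "u < 1" "0 < u" using e' by (auto simp: u_def)
  then have "u^2 < 1" by (simp add: power_less_one_iff abs_less_iff)
  then have v: "0 < v" by (simp add: v_def)
  have v2: "u^2 + v^2 = 1" using \<open>u^2 < 1\<close> by (simp add: v_def)
  define y where "y = f p"
  have y: "y \<in> S1" using bij p by (auto simp: y_def bij_betw_def)
  then have ny: "norm y = 1" by (simp add: S1_def)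
  define a' where "a' = y * Complex u (-v)"
  define b' where "b' = y * Complex u v"
  have na: "norm (Complex u (-v)) = 1" "norm (Complex u v) = 1"
    using v2 by (simp_all add: cmod_def)
  have a'S: "a' \<in> S1" and b'S: "b' \<in> S1"
    using ny na by (simp_all add: a'_def b'_def S1_def norm_mult)
  define a where "a = inv_into S1 f a'"
  define b where "b = inv_into S1 f b'"
  have a'f: "a' \<in> f ` S1" and b'f: "b' \<in> f ` S1" using a'S b'S bij by (simp_all add: bij_betw_def)
  have aS: "a \<in> S1" and fa: "f a = a'"
    unfolding a_def by (rule inv_into_into[OF a'f], rule f_inv_into_f[OF a'f])
  have bS: "b \<in> S1" and fb: "f b = b'"
    unfolding b_def by (rule inv_into_into[OF b'f], rule f_inv_into_f[OF b'f])
  have key: "circle_orient a z b = sgn (2 * v * (Re (f z * cnj y) - u))" if "z \<in> S1" for z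
  proof -
    have "circle_orient a z b = circle_orient a' (f z) b'"
      using ori[rule_format, OF aS that bS] fa fb by simp
    also have "\<dots> = sgn (2 * v * (Re (f z * cnj y) - u))"
      by (simp only: circle_orient_def a'_def b'_def arc_formula[OF ny])
    finally show ?thesis .
  qed
  define U where "U = {z. 0 < Im (cnj (z - a) * (b - a))}"
  have Ueq: "U = {z. 0 < (Re z - Re a)*Im(b-a) - (Im z - Im a)*Re(b-a)}"
    unfolding U_def by (simp add: algebra_simps)
  have "open U" unfolding Ueq
    by (intro open_Collect_less continuous_intros)
  have "Re (y * cnj y) = (norm y)^2" unfolding cmod_power2 by (simp add: power2_eq_square)
  then have "Re (y * cnj y) = 1" using ny by simp
  then have "circle_orient a p b = 1" using key[OF p] v u by (simp add: y_def)
  then have "p \<in> U" by (simp add: U_def circle_orient_def sgn_if split: if_splits)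
  then obtain d where d: "0 < d" "ball p d \<subseteq> U" using \<open>open U\<close> open_contains_ball by blast
  show "\<exists>d>0. \<forall>x'\<in>S1. dist x' p < d \<longrightarrow> dist (f x') (f p) < e"
  proof (intro exI conjI ballI impI)
    show "0 < d" by fact
    fix x' assume x': "x' \<in> S1" "dist x' p < d"
    then have "x' \<in> U" using d by (auto simp: dist_commute)
    then have "circle_orient a x' b = 1" by (simp add: U_def circle_orient_def)
    then have "sgn (2 * v * (Re (f x' * cnj y) - u)) = 1" using key[OF x'(1)] by simp
    then have "0 < v * (Re (f x' * cnj y) - u)" by (simp add: sgn_if split: if_splits)
    then have gt: "Re (f x' * cnj y) > u" using v by (simp add: zero_less_mult_iff)
    have fx': "f x' \<in> S1" using x' bij by (auto simp: bij_betw_def)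
    then have nfx: "norm (f x') = 1" by (simp add: S1_def)
    have "(dist (f x') y)^2 = 2 - 2 * Re (f x' * cnj y)"
      by (rule dist_formula[OF ny nfx])
    also have "\<dots> < 2 - 2*u" using gt by simp
    also have "\<dots> = e'^2/2" by (simp add: u_def)
    also have "\<dots> < e'^2" using e' by simp
    also have "\<dots> \<le> e^2" using e' by (intro power_mono) auto
    finally have "(dist (f x') y)^2 < e^2" .
    then have "dist (f x') y < e" by (rule power_less_imp_less_base) (use e in linarith)
    then show "dist (f x') (f p) < e" by (simp add: y_def)
  qed
qed

lemma orient_homeo:
  assumes bij: "bij_betw f S1 S1"
    and ori: "\<forall>a\<in>S1. \<forall>b\<in>S1. \<forall>c\<in>S1. circle_orient (f a) (f b) (f c) = circle_orient a b c"
  shows "\<exists>g. homeomorphism S1 S1 f g"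
  using homeomorphism_compact[of S1 f S1] orient_continuous[OF assms] bij
  by (simp add: S1_def bij_betw_def)


definition dense01 :: "real set \<Rightarrow> bool" where
  "dense01 D \<longleftrightarrow> (\<forall>a b. 0 \<le> a \<and> a < b \<and> b \<le> 1 \<longrightarrow> (\<exists>d\<in>D. a < d \<and> d < b))"

definition cycpres :: "(real \<Rightarrow> real) \<Rightarrow> real set \<Rightarrow> bool" where
  "cycpres f A \<longleftrightarrow> (\<forall>a\<in>A. \<forall>b\<in>A. \<forall>c\<in>A. cyc (f a) (f b) (f c) = cyc a b c)"

lemma dense01D: "dense01 D \<Longrightarrow> 0 \<le> a \<Longrightarrow> a < b \<Longrightarrow> b \<le> 1 \<Longrightarrow> \<exists>d\<in>D. a < d \<and> d < b"
  unfolding dense01_def by blast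

lemma lin_ext:
  fixes \<psi> :: "real \<Rightarrow> real"
  assumes DS: "D \<subseteq> {0..<1}" and D'S: "D' \<subseteq> {0..<1}" and D0: "0 \<in> D" and D'0: "0 \<in> D'"
    and dD: "dense01 D" and dD': "dense01 D'" and bij: "bij_betw \<psi> D D'"
    and mono: "\<And>x y. x \<in> D \<Longrightarrow> y \<in> D \<Longrightarrow> x < y \<Longrightarrow> \<psi> x < \<psi> y"
  shows "\<exists>h. bij_betw h {0..<1} {0..<1} \<and> (\<forall>x\<in>{0..<1}. \<forall>y\<in>{0..<1}. x < y \<longrightarrow> h x < h y)
            \<and> (\<forall>d\<in>D. h d = \<psi> d)"
proof -
  have \<psi>D: "\<psi> d \<in> D'" if "d \<in> D" for d using bij that by (auto simp: bij_betw_def)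
  have \<psi>r: "0 \<le> \<psi> d" "\<psi> d < 1" if "d \<in> D" for d using \<psi>D[OF that] D'S by auto
  have monoe: "\<psi> x \<le> \<psi> y" if "x \<in> D" "y \<in> D" "x \<le> y" for x y
    using mono[of x y] that by (cases "x = y") auto
  have monor: "x < y" if "x \<in> D" "y \<in> D" "\<psi> x < \<psi> y" for x y
    using monoe[of y x] that by force
  obtain d0 where d0: "d0 \<in> D" "\<psi> d0 = 0" using D'0 bij by (auto simp: bij_betw_def)
  have psi0: "\<psi> 0 = 0"
  proof (rule ccontr)
    assume "\<psi> 0 \<noteq> 0"
    then have "\<psi> 0 > 0" using \<psi>r[OF D0] by simp
    then have "d0 < 0" using monor[OF d0(1) D0] d0 by simp
    then show False using d0 DS by auto
  qed
  define h where "h u = Sup (\<psi> ` {d\<in>D. d \<le> u})" for u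
  have ne: "\<psi> ` {d\<in>D. d \<le> u} \<noteq> {}" if "0 \<le> u" for u using D0 that by auto
  have bdd: "bdd_above (\<psi> ` {d\<in>D. d \<le> u})" for u
    using \<psi>r by (intro bdd_aboveI[of _ 1]) (auto intro: less_imp_le)
  have h_upper: "\<psi> d \<le> h u" if "d \<in> D" "d \<le> u" for d u
    unfolding h_def using that bdd by (intro cSup_upper) auto
  have h_least: "h u \<le> M" if "0 \<le> u" "\<And>d. d \<in> D \<Longrightarrow> d \<le> u \<Longrightarrow> \<psi> d \<le> M" for u M
    unfolding h_def using that ne[OF that(1)] by (intro cSup_least) auto
  have ext: "h d = \<psi> d" if "d \<in> D" for d
    using h_upper[OF that order_refl] h_least[of d "\<psi> d"] monoe[OF _ that] that DS
    by (force intro: antisym)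
  have smono: "h x < h y" if xy: "x \<in> {0..<1}" "y \<in> {0..<1}" "x < y" for x y
  proof -
    obtain d1 where d1: "d1 \<in> D" "x < d1" "d1 < y" using dense01D[OF dD, of x y] xy by auto
    obtain d2 where d2: "d2 \<in> D" "d1 < d2" "d2 < y" using dense01D[OF dD, of d1 y] xy d1 by auto
    have "h x \<le> \<psi> d1"
      using xy d1 by (intro h_least) (auto intro!: less_imp_le mono)
    also have "\<psi> d1 < \<psi> d2" using mono d1 d2 by auto
    also have "\<psi> d2 \<le> h y" using h_upper d2 by auto
    finally show ?thesis .
  qed
  have hr: "h u \<in> {0..<1}" if uu: "u \<in> {0..<1}" for u
  proof -
    have "0 \<le> h u" using h_upper[OF D0, of u] uu psi0 by simp
    moreover obtain d where d: "d \<in> D" "u < d" "d < 1" using dense01D[OF dD, of u 1] uu by auto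
    then have "h u \<le> \<psi> d" using uu by (intro h_least) (auto intro!: less_imp_le mono)
    then have "h u < 1" using \<psi>r[OF d(1)] by simp
    ultimately show ?thesis by simp
  qed
  have surj: "\<exists>u\<in>{0..<1}. h u = v" if v: "v \<in> {0..<1}" for v
  proof -
    define T where "T = {d\<in>D. \<psi> d \<le> v}"
    have T0: "0 \<in> T" using D0 psi0 v by (simp add: T_def)
    obtain d' where d': "d' \<in> D'" "v < d'" "d' < 1" using dense01D[OF dD', of v 1] v by auto
    obtain ds where ds: "ds \<in> D" "\<psi> ds = d'" using d'(1) bij by (auto simp: bij_betw_def)
    have Tb: "t < ds" if "t \<in> T" for t
      using that ds d' monor[of t ds] by (auto simp: T_def)
    have bddT: "bdd_above T" using Tb by (auto intro!: bdd_aboveI[of _ ds] less_imp_le)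
    define u where "u = Sup T"
    have u0: "0 \<le> u" unfolding u_def using T0 bddT by (intro cSup_upper2) auto
    have u1: "u \<le> ds" unfolding u_def using T0 Tb by (intro cSup_least) (auto intro: less_imp_le)
    have uU: "u \<in> {0..<1}" using u0 u1 ds DS by auto
    have "h u \<le> v"
    proof (rule h_least[OF u0])
      fix d assume d: "d \<in> D" "d \<le> u"
      show "\<psi> d \<le> v"
      proof (rule ccontr)
        assume "\<not> \<psi> d \<le> v"
        then have "v < \<psi> d" by simp
        moreover have "\<psi> d \<le> 1" using \<psi>r[OF d(1)] by simp
        ultimately obtain d'' where d'': "d'' \<in> D'" "v < d''" "d'' < \<psi> d"
          using dense01D[OF dD', of v "\<psi> d"] v by auto
        obtain e where e: "e \<in> D" "\<psi> e = d''" using d''(1) bij by (auto simp: bij_betw_def)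
        have "e < d" using monor[OF e(1) d(1)] e d'' by simp
        have "t < e" if "t \<in> T" for t
          using that e d'' monor[of t e] by (auto simp: T_def)
        then have "u \<le> e" unfolding u_def using T0 by (intro cSup_least) (auto intro: less_imp_le)
        then show False using \<open>e < d\<close> d by simp
      qed
    qed
    moreover have "v \<le> h u"
    proof (rule ccontr)
      assume "\<not> v \<le> h u"
      then have "h u < v" by simp
      then obtain d'' where d'': "d'' \<in> D'" "h u < d''" "d'' < v"
        using dense01D[OF dD', of "h u" v] v hr[OF uU] by auto
      obtain e where e: "e \<in> D" "\<psi> e = d''" using d''(1) bij by (auto simp: bij_betw_def)
      have "e \<in> T" using e d'' by (simp add: T_def)
      then have "e \<le> u" unfolding u_def using bddT by (intro cSup_upper)
      then have "\<psi> e \<le> h u" using h_upper e(1) by blast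
      then show False using e d'' by simp
    qed
    ultimately show ?thesis using uU by (intro bexI[of _ u]) auto
  qed
  have "bij_betw h {0..<1} {0..<1}"
    unfolding bij_betw_def
  proof
    show "inj_on h {0..<1}"
    proof (rule inj_onI)
      fix x y assume "x \<in> {0..<1}" "y \<in> {0..<1}" "h x = h y"
      then show "x = y" using smono[of x y] smono[of y x] by (cases "x < y"; cases "y < x") auto
    qed
    show "h ` {0..<1} = {0..<1}" using hr surj by blast
  qed
  then show ?thesis using smono ext by blast
qed


definition rot :: "real \<Rightarrow> real \<Rightarrow> real" where
  "rot c x = (if x + c < 1 then x + c else x + c - 1)"
definition sh :: "real \<Rightarrow> real \<Rightarrow> real" where
  "sh c x = (if c \<le> x then x - c else x - c + 1)"

lemma rot_cyc:
  assumes "c \<in> {0..<1}" "x \<in> {0..<1}" "y \<in> {0..<1}" "z \<in> {0..<1}"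
  shows "cyc (rot c x) (rot c y) (rot c z) = cyc x y z"
  using assms unfolding cyc_def rot_def
  by (auto simp: sgn_if)

lemma rot_range: "c \<in> {0..<1} \<Longrightarrow> x \<in> {0..<1} \<Longrightarrow> rot c x \<in> {0..<1}"
  by (auto simp: rot_def)
lemma sh_range: "c \<in> {0..<1} \<Longrightarrow> x \<in> {0..<1} \<Longrightarrow> sh c x \<in> {0..<1}"
  by (auto simp: sh_def)
lemma rot_sh: "c \<in> {0..<1} \<Longrightarrow> x \<in> {0..<1} \<Longrightarrow> rot c (sh c x) = x"
  by (auto simp: sh_def rot_def)
lemma sh_rot: "c \<in> {0..<1} \<Longrightarrow> x \<in> {0..<1} \<Longrightarrow> sh c (rot c x) = x"
  by (auto simp: sh_def rot_def)

lemma sh_cyc: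
  assumes "c \<in> {0..<1}" "x \<in> {0..<1}" "y \<in> {0..<1}" "z \<in> {0..<1}"
  shows "cyc (sh c x) (sh c y) (sh c z) = cyc x y z"
  using rot_cyc[of c "sh c x" "sh c y" "sh c z"] assms
  by (simp add: sh_range rot_sh del: atLeastLessThan_iff)

lemma sh_inj: "c \<in> {0..<1} \<Longrightarrow> inj_on (sh c) {0..<1}"
  by (metis inj_onI rot_sh)

lemma mono_cyc:
  assumes "\<forall>x\<in>A. \<forall>y\<in>A. x < y \<longrightarrow> h x < h y" "a \<in> A" "b \<in> A" "c \<in> A"
  shows "cyc (h a) (h b) (h c) = cyc a b c"
proof -
  have s: "sgn (h y - h x) = sgn (y - x)" if "x \<in> A" "y \<in> A" for x y
  proof -
    have m: "\<And>x y. x\<in>A \<Longrightarrow> y\<in>A \<Longrightarrow> x<y \<Longrightarrow> h x < h y" using assms(1) by blast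
    show ?thesis using m[of x y] m[of y x] that by (cases "x < y"; cases "y < x") (auto simp: sgn_if)
  qed
  show ?thesis unfolding cyc_def using s assms by simp
qed

lemma circ_ext:
  assumes DS: "D \<subseteq> {0..<1}" and D0: "0 \<in> D" and dD: "dense01 D"
    and bij: "bij_betw \<phi> D D" and cp: "cycpres \<phi> D"
  shows "\<exists>f. bij_betw f {0..<1} {0..<1} \<and> cycpres f {0..<1} \<and> (\<forall>d\<in>D. f d = \<phi> d)"
proof -
  define c0 where "c0 = \<phi> 0"
  have \<phi>D: "\<phi> d \<in> D" if "d \<in> D" for d using bij that by (auto simp: bij_betw_def)
  have c0D: "c0 \<in> D" using \<phi>D[OF D0] by (simp add: c0_def)
  then have c0r: "c0 \<in> {0..<1}" using DS by auto
  define \<psi> where "\<psi> d = sh c0 (\<phi> d)" for d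
  define D' where "D' = sh c0 ` D"
  have D'S: "D' \<subseteq> {0..<1}" using DS c0r sh_range by (auto simp: D'_def)
  have D'0: "0 \<in> D'" using c0D unfolding D'_def by (intro image_eqI[of _ _ c0]) (auto simp: sh_def)
  have dD': "dense01 D'" unfolding dense01_def
  proof (intro allI impI)
    fix a b :: real assume ab: "0 \<le> a \<and> a < b \<and> b \<le> 1"
    show "\<exists>d\<in>D'. a < d \<and> d < b"
    proof (cases "a + c0 < 1")
      case True
      obtain d where d: "d \<in> D" "a + c0 < d" "d < min (b + c0) 1"
        using dense01D[OF dD, of "a + c0" "min (b+c0) 1"] ab True c0r by auto
      then have "sh c0 d = d - c0" using ab by (simp add: sh_def)
      moreover have "sh c0 d \<in> D'" using d(1) by (simp add: D'_def)
      ultimately show ?thesis using d by (intro bexI[of _ "sh c0 d"]) auto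
    next
      case False
      obtain d where d: "d \<in> D" "a + c0 - 1 < d" "d < b + c0 - 1"
        using dense01D[OF dD, of "a + c0 - 1" "b + c0 - 1"] ab False c0r by auto
      then have "sh c0 d = d - c0 + 1" using ab by (simp add: sh_def)
      moreover have "sh c0 d \<in> D'" using d(1) by (simp add: D'_def)
      ultimately show ?thesis using d by (intro bexI[of _ "sh c0 d"]) auto
    qed
  qed
  have bij\<psi>: "bij_betw \<psi> D D'"
  proof -
    have "bij_betw (sh c0) D D'" unfolding D'_def
      using sh_inj[OF c0r] DS by (auto simp: bij_betw_def intro: inj_on_subset)
    then have "bij_betw (sh c0 \<circ> \<phi>) D D'" by (rule bij_betw_trans[OF bij])
    moreover have "\<psi> = (\<lambda>x. sh c0 (\<phi> x))" by (simp add: \<psi>_def fun_eq_iff)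
    ultimately show ?thesis by (simp add: comp_def)
  qed
  have psi0: "\<psi> 0 = 0" by (simp add: \<psi>_def c0_def sh_def)
  have \<psi>r: "\<psi> d \<in> {0..<1}" if "d \<in> D" for d using bij\<psi> that D'S by (auto simp: bij_betw_def)
  have \<psi>inj: "inj_on \<psi> D" using bij\<psi> by (simp add: bij_betw_def)
  have mono: "\<psi> x < \<psi> y" if xy: "x \<in> D" "y \<in> D" "x < y" for x y
  proof (cases "x = 0")
    case True
    then have "\<psi> y \<noteq> \<psi> x" using \<psi>inj xy by (metis inj_on_eq_iff less_irrefl)
    then show ?thesis using True psi0 \<psi>r[OF xy(2)] by simp
  next
    case False
    then have x0: "0 < x" using xy DS by force
    have "cyc 0 x y = 1" using x0 xy by (simp add: cyc_def)
    moreover have "cyc (\<psi> 0) (\<psi> x) (\<psi> y) = cyc 0 x y"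
    proof -
      have "cyc (\<psi> 0) (\<psi> x) (\<psi> y) = cyc (\<phi> 0) (\<phi> x) (\<phi> y)"
        unfolding \<psi>_def using sh_cyc c0r \<phi>D D0 xy DS by blast
      also have "\<dots> = cyc 0 x y" using cp D0 xy by (simp add: cycpres_def)
      finally show ?thesis .
    qed
    ultimately have "cyc 0 (\<psi> x) (\<psi> y) = 1" using psi0 by simp
    then show ?thesis using \<psi>r[OF xy(1)] \<psi>r[OF xy(2)]
      by (auto simp: cyc_def sgn_if split: if_splits)
  qed
  obtain h where h: "bij_betw h {0..<1} {0..<1}" "\<forall>x\<in>{0..<1}. \<forall>y\<in>{0..<1}. x < y \<longrightarrow> h x < h y"
      "\<forall>d\<in>D. h d = \<psi> d"
    using lin_ext[OF DS D'S D0 D'0 dD dD' bij\<psi> mono] by blast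
  have hr: "h x \<in> {0..<1}" if "x \<in> {0..<1}" for x using h(1) that by (auto simp: bij_betw_def)
  define f where "f x = rot c0 (h x)" for x
  have "bij_betw (rot c0) {0..<1} {0..<1}"
    by (rule bij_betw_byWitness[of _ "sh c0"]) (use c0r in \<open>auto simp: rot_def sh_def\<close>)
  then have fb: "bij_betw f {0..<1} {0..<1}" unfolding f_def
    using bij_betw_trans[OF h(1)] by (simp add: comp_def)
  have fc: "cycpres f {0..<1}" unfolding cycpres_def f_def
    using rot_cyc[OF c0r hr hr hr] mono_cyc[OF h(2)] by simp
  have fe: "\<forall>d\<in>D. f d = \<phi> d"
  proof
    fix d assume d: "d \<in> D"
    then have "\<phi> d \<in> {0..<1}" using \<phi>D[OF d] DS by blast
    then show "f d = \<phi> d" using h(3) d rot_sh[OF c0r] by (simp add: f_def \<psi>_def)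
  qed
  show ?thesis using fb fc fe by blast
qed

lemma circ_unique:
  assumes DS: "D \<subseteq> {0..<1}" and dD: "dense01 D"
    and b1: "bij_betw f1 {0..<1} {0..<1}" and b2: "bij_betw f2 {0..<1} {0..<1}"
    and c1: "cycpres f1 {0..<1}" and c2: "cycpres f2 {0..<1}"
    and agree: "\<forall>d\<in>D. f1 d = f2 d" and im: "f1 ` D = D"
    and u: "u \<in> {0..<1}"
  shows "f1 u = f2 u"
proof (rule ccontr)
  assume ne: "f1 u \<noteq> f2 u"
  define v1 where "v1 = f1 u"
  define v2 where "v2 = f2 u"
  have v: "v1 \<in> {0..<1}" "v2 \<in> {0..<1}" using b1 b2 u by (auto simp: v1_def v2_def bij_betw_def)
  have "\<exists>d1\<in>D. \<exists>d2\<in>D. cyc v1 d1 d2 = 1 \<and> cyc v2 d1 d2 = -1"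
  proof (cases "v1 < v2")
    case True
    obtain d1 where d1: "d1 \<in> D" "v1 < d1" "d1 < v2" using dense01D[OF dD, of v1 v2] v True by auto
    obtain d2 where d2: "d2 \<in> D" "v2 < d2" "d2 < 1" using dense01D[OF dD, of v2 1] v by auto
    have "cyc v1 d1 d2 = 1 \<and> cyc v2 d1 d2 = -1" using d1 d2 True by (simp add: cyc_def)
    then show ?thesis using d1(1) d2(1) by blast
  next
    case False
    then have "v2 < v1" using ne by (simp add: v1_def v2_def)
    obtain d1 where d1: "d1 \<in> D" "v1 < d1" "d1 < 1" using dense01D[OF dD, of v1 1] v by auto
    obtain d2 where d2: "d2 \<in> D" "v2 < d2" "d2 < v1" using dense01D[OF dD, of v2 v1] v \<open>v2 < v1\<close> by auto
    have "cyc v1 d1 d2 = 1 \<and> cyc v2 d1 d2 = -1" using d1 d2 \<open>v2 < v1\<close> by (simp add: cyc_def)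
    then show ?thesis using d1(1) d2(1) by blast
  qed
  then obtain d1 d2 where d: "d1 \<in> D" "d2 \<in> D" "cyc v1 d1 d2 = 1" "cyc v2 d1 d2 = -1" by blast
  obtain e1 where e1: "e1 \<in> D" "f1 e1 = d1" using d(1) im by (metis imageE)
  obtain e2 where e2: "e2 \<in> D" "f1 e2 = d2" using d(2) im by (metis imageE)
  have er: "e1 \<in> {0..<1}" "e2 \<in> {0..<1}" using e1 e2 DS by auto
  have "cyc u e1 e2 = cyc v1 d1 d2"
    using c1[unfolded cycpres_def, rule_format, OF u er(1) er(2)] e1 e2 by (simp add: v1_def)
  moreover have "cyc u e1 e2 = cyc v2 d1 d2"
    using c2[unfolded cycpres_def, rule_format, OF u er(1) er(2)] e1 e2 agree by (simp add: v2_def)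
  ultimately show False using d by simp
qed


locale wts =
  fixes Q :: "'a set" and e :: "'a \<Rightarrow> nat"
  assumes einj: "inj_on e Q"
begin

definition ind :: "'a set \<Rightarrow> nat \<Rightarrow> real" where
  "ind S n = (if n \<in> e ` S then (1/2)^Suc n else 0)"

definition mu :: "'a set \<Rightarrow> real" where
  "mu S = suminf (ind S)"

lemma geo_summable: "summable (\<lambda>n. (1/2::real)^Suc n)"
  using complete_algebra_summable_geometric[of "1/2::real"] by (simp add: summable_mult)

lemma geo_sum: "(\<Sum>n. (1/2::real)^Suc n) = 1"
proof -
  have "(\<Sum>n. (1/2::real)^Suc n) = (\<Sum>n. (1/2) * (1/2::real)^n)" by simp
  also have "\<dots> = (1/2) * (\<Sum>n. (1/2::real)^n)"
    using complete_algebra_summable_geometric[of "1/2::real"] by (intro suminf_mult) simp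
  also have "\<dots> = 1" using suminf_geometric[of "1/2::real"] by simp
  finally show ?thesis .
qed

lemma ind_nonneg: "0 \<le> ind S n" by (simp add: ind_def)
lemma ind_le: "ind S n \<le> (1/2)^Suc n" by (simp add: ind_def)

lemma ind_summable: "summable (ind S)"
  by (rule summable_comparison_test'[OF geo_summable, of 0]) (simp add: ind_def)

lemma mu_nonneg: "0 \<le> mu S"
  unfolding mu_def by (intro suminf_nonneg ind_summable ind_nonneg)

lemma mu_mono: "S \<subseteq> T \<Longrightarrow> mu S \<le> mu T"
  unfolding mu_def by (intro suminf_le ind_summable) (auto simp: ind_def)

lemma mu_empty: "mu {} = 0"
proof -
  have "ind {} = (\<lambda>n. 0)" by (simp add: ind_def fun_eq_iff)
  then show ?thesis by (simp add: mu_def)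
qed

lemma mu_union:
  assumes "S \<subseteq> Q" "T \<subseteq> Q" "S \<inter> T = {}"
  shows "mu (S \<union> T) = mu S + mu T"
proof -
  have "e ` S \<inter> e ` T = {}" using einj assms by (auto dest: inj_onD)
  then have "ind (S \<union> T) = (\<lambda>n. ind S n + ind T n)"
    by (auto simp: ind_def image_Un fun_eq_iff)
  then show ?thesis unfolding mu_def
    by (simp add: suminf_add[OF ind_summable ind_summable])
qed

lemma mu_single: "mu {x} = (1/2)^Suc (e x)"
proof -
  have "ind {x} = (\<lambda>n. if n = e x then (1/2)^Suc n else 0)"
    by (auto simp: ind_def fun_eq_iff)
  then show ?thesis unfolding mu_def using sums_single[of "e x" "\<lambda>n. (1/2::real)^Suc n"]
    by (simp add: sums_iff)
qed

lemma mu_tail: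
  assumes "\<forall>x\<in>S. N \<le> e x"
  shows "mu S \<le> (1/2)^N"
proof -
  have z: "sum (ind S) {..<N} = 0" using assms by (force simp: ind_def intro!: sum.neutral)
  have "mu S = (\<Sum>n. ind S (n + N))"
    unfolding mu_def using suminf_split_initial_segment[OF ind_summable, of S N] z by simp
  also have "\<dots> \<le> (\<Sum>n. (1/2)^N * (1/2::real)^Suc n)"
  proof (rule suminf_le)
    fix n
    have "(1/2::real)^Suc (n + N) = (1/2)^N * (1/2)^Suc n"
      by (simp only: power_add[symmetric] add_Suc) (simp add: add.commute)
    then show "ind S (n + N) \<le> (1/2)^N * (1/2)^Suc n"
      using ind_le[of S "n + N"] by simp
  next
    show "summable (\<lambda>n. ind S (n + N))"
      using ind_summable summable_iff_shift by blast
    show "summable (\<lambda>n. (1/2)^N * (1/2::real)^Suc n)"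
      using geo_summable by (rule summable_mult)
  qed
  also have "\<dots> = (1/2)^N" using suminf_mult[OF geo_summable, of "(1/2)^N"] geo_sum by simp
  finally show ?thesis .
qed

lemma partial_mu:
  assumes "S \<subseteq> Q"
  shows "sum (ind S) {..<M} = mu {x\<in>S. e x < M}"
proof -
  have "ind {x\<in>S. e x < M} n = (if n < M then ind S n else 0)" for n
    by (auto simp: ind_def)
  then have "mu {x\<in>S. e x < M} = sum (ind {x\<in>S. e x < M}) {..<M}"
    unfolding mu_def by (intro suminf_finite) auto
  also have "\<dots> = sum (ind S) {..<M}"
    by (intro sum.cong) (auto simp: ind_def)
  finally show ?thesis by simp
qed

lemma finite_low:
  assumes "S \<subseteq> Q"
  shows "finite {x\<in>S. e x < M}"
proof -
  have "e ` {x\<in>S. e x < M} \<subseteq> {..<M}" by auto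
  then have "finite (e ` {x\<in>S. e x < M})" by (rule finite_subset) simp
  moreover have "inj_on e {x\<in>S. e x < M}" using einj assms by (auto intro: inj_on_subset)
  ultimately show ?thesis by (rule finite_imageD)
qed

lemma mu_bound_partial:
  assumes "S \<subseteq> Q" "\<And>M. mu {x\<in>S. e x < M} \<le> a"
  shows "mu S \<le> a"
  unfolding mu_def using assms partial_mu[OF assms(1)]
  by (intro suminf_le_const ind_summable) auto

end


locale cord =
  fixes Q :: "'a set" and c :: "'a \<Rightarrow> 'a \<Rightarrow> 'a \<Rightarrow> int" and q0 :: 'a
  assumes cnt: "countable Q" and q0Q: "q0 \<in> Q"
    and vals: "\<forall>q1\<in>Q. \<forall>q2\<in>Q. \<forall>q3\<in>Q. c q1 q2 q3 \<in> {-1, 0, 1}"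
    and zero: "\<forall>q1\<in>Q. \<forall>q2\<in>Q. \<forall>q3\<in>Q. (c q1 q2 q3 = 0 \<longleftrightarrow> (q1 = q2 \<or> q2 = q3 \<or> q1 = q3))"
    and coc: "\<forall>q1\<in>Q. \<forall>q2\<in>Q. \<forall>q3\<in>Q. \<forall>q4\<in>Q. c q2 q3 q4 - c q1 q3 q4 + c q1 q2 q4 - c q1 q2 q3 = 0"
begin

sublocale wts Q "to_nat_on Q"
  by unfold_locales (rule inj_on_to_nat_on[OF cnt])

lemma c_cyc: assumes "a \<in> Q" "b \<in> Q" "d \<in> Q" shows "c b d a = c a b d"
proof -
  have "c a d a = 0" "c a b a = 0" using zero assms by auto
  then show ?thesis using coc[rule_format, of a b d a] assms by simp
qed

lemma c_anti: assumes "a \<in> Q" "b \<in> Q" "d \<in> Q" shows "c b a d = - c a b d"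
proof -
  have "c a a d = 0" "c a b a = 0" using zero assms by auto
  then show ?thesis using coc[rule_format, of a b a d] assms by simp
qed

lemma c_anti2: assumes "a \<in> Q" "b \<in> Q" "d \<in> Q" shows "c a d b = - c a b d"
proof -
  have "c b d b = 0" "c a b b = 0" using zero assms by auto
  then show ?thesis using coc[rule_format, of a b d b] assms by simp
qed

lemma c_vals: "a \<in> Q \<Longrightarrow> b \<in> Q \<Longrightarrow> d \<in> Q \<Longrightarrow> c a b d = -1 \<or> c a b d = 0 \<or> c a b d = 1"
  using vals by auto

definition lt :: "'a \<Rightarrow> 'a \<Rightarrow> bool" where
  "lt x y \<longleftrightarrow> x \<noteq> y \<and> (x = q0 \<or> (y \<noteq> q0 \<and> c q0 x y = 1))"

lemma lt_irrefl: "\<not> lt x x" by (simp add: lt_def)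

lemma lt_total: "x \<in> Q \<Longrightarrow> y \<in> Q \<Longrightarrow> x \<noteq> y \<Longrightarrow> lt x y \<or> lt y x"
  unfolding lt_def using c_anti2[of q0 x y] c_vals[of q0 x y] zero q0Q by auto

lemma lt_asym: "x \<in> Q \<Longrightarrow> y \<in> Q \<Longrightarrow> lt x y \<Longrightarrow> \<not> lt y x"
  unfolding lt_def using c_anti2[of q0 x y] q0Q by auto

lemma lt_trans: assumes "x \<in> Q" "y \<in> Q" "z \<in> Q" "lt x y" "lt y z" shows "lt x z"
proof -
  have "x \<noteq> z" using assms lt_asym by blast
  show ?thesis
  proof (cases "x = q0")
    case True then show ?thesis using \<open>x \<noteq> z\<close> by (simp add: lt_def)
  next
    case False
    then have 1: "c q0 x y = 1" "y \<noteq> q0" using assms(4) by (auto simp: lt_def)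
    then have 2: "c q0 y z = 1" "z \<noteq> q0" using assms(5) by (auto simp: lt_def)
    have "c x y z - c q0 y z + c q0 x z - c q0 x y = 0" using coc q0Q assms by blast
    then have "c x y z + c q0 x z = 2" using 1 2 by simp
    then have "c q0 x z = 1" using c_vals[of x y z] c_vals[of q0 x z] assms q0Q by auto
    then show ?thesis using \<open>x \<noteq> z\<close> 2 by (simp add: lt_def)
  qed
qed

definition sig :: "'a \<Rightarrow> 'a \<Rightarrow> real" where
  "sig x y = (if x = y then 0 else if lt x y then 1 else -1)"

lemma sig_anti: "x \<in> Q \<Longrightarrow> y \<in> Q \<Longrightarrow> sig y x = - sig x y"
  unfolding sig_def using lt_total lt_asym by fastforce

lemma sig_sq: "x \<in> Q \<Longrightarrow> y \<in> Q \<Longrightarrow> x \<noteq> y \<Longrightarrow> sig x y * sig x y = 1"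
  unfolding sig_def by auto

lemma sig_c0: "x \<in> Q \<Longrightarrow> y \<in> Q \<Longrightarrow> x \<noteq> q0 \<Longrightarrow> y \<noteq> q0 \<Longrightarrow> sig x y = of_int (c q0 x y)"
  unfolding sig_def lt_def using c_vals[of q0 x y] zero q0Q by auto

lemma lemmaA:
  assumes "x1 \<in> Q" "x2 \<in> Q" "x3 \<in> Q"
  shows "sig x1 x2 * sig x2 x3 * sig x1 x3 = of_int (c x1 x2 x3)"
proof (cases "x1 = x2 \<or> x2 = x3 \<or> x1 = x3")
  case True
  then have "c x1 x2 x3 = 0" using zero assms by blast
  then show ?thesis using True by (auto simp: sig_def)
next
  case False
  then have d: "x1 \<noteq> x2" "x2 \<noteq> x3" "x1 \<noteq> x3" by auto
  show ?thesis
  proof (cases "x1 = q0")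
    case True
    then show ?thesis using d assms sig_c0[of x2 x3] by (simp add: sig_def lt_def)
  next
    case n1: False
    show ?thesis
    proof (cases "x2 = q0")
      case True
      have "c x1 x2 x3 = - c q0 x1 x3" using c_anti[of q0 x1 x3] True assms by simp
      then show ?thesis using True n1 d assms sig_c0[of x1 x3] by (simp add: sig_def lt_def)
    next
      case n2: False
      show ?thesis
      proof (cases "x3 = q0")
        case True
        have "c x1 x2 x3 = c q0 x1 x2" using c_cyc[of q0 x1 x2] True assms by simp
        then show ?thesis using True n1 n2 d assms sig_c0[of x1 x2] by (simp add: sig_def lt_def)
      next
        case n3: False
        have s: "sig x1 x2 = of_int (c q0 x1 x2)" "sig x2 x3 = of_int (c q0 x2 x3)"
            "sig x1 x3 = of_int (c q0 x1 x3)"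
          using sig_c0 assms n1 n2 n3 by auto
        have cc: "c x1 x2 x3 - c q0 x2 x3 + c q0 x1 x3 - c q0 x1 x2 = 0"
          using coc q0Q assms by blast
        have v: "c q0 x1 x2 \<in> {-1,1}" "c q0 x2 x3 \<in> {-1,1}" "c q0 x1 x3 \<in> {-1,1}"
            "c x1 x2 x3 \<in> {-1,0,1}"
          using vals zero assms q0Q n1 n2 n3 d by (auto dest: c_vals)
        have "c q0 x1 x2 * c q0 x2 x3 * c q0 x1 x3 = c x1 x2 x3"
          using v cc by auto
        then show ?thesis unfolding s by (metis of_int_mult)
      qed
    qed
  qed
qed

end


context cord begin

definition W :: real where "W = mu Q"
definition w :: "'a \<Rightarrow> real" where "w x = (1/2)^Suc (to_nat_on Q x) / W"
definition io :: "'a \<Rightarrow> real" where "io x = mu {y\<in>Q. lt y x} / W"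
definition Phi :: "'a \<Rightarrow> real \<Rightarrow> real" where "Phi x t = io x + t * w x"

lemma W_pos: "0 < W"
  unfolding W_def mu_def
  by (rule suminf_pos2[OF ind_summable, of _ "to_nat_on Q q0"]) (auto simp: ind_nonneg ind_def q0Q)

lemma w_pos: "0 < w x" using W_pos by (simp add: w_def)

lemma io_nonneg: "0 \<le> io x" using W_pos mu_nonneg by (simp add: io_def)

lemma mu_lt_step:
  assumes "x \<in> Q" "S \<subseteq> Q" "{y\<in>Q. lt y x} \<subseteq> S" "x \<in> S"
  shows "mu {y\<in>Q. lt y x} + (1/2)^Suc (to_nat_on Q x) \<le> mu S"
proof -
  have "mu {y\<in>Q. lt y x} + (1/2)^Suc (to_nat_on Q x) = mu ({y\<in>Q. lt y x} \<union> {x})"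
    using mu_union[of "{y\<in>Q. lt y x}" "{x}"] mu_single[of x] assms lt_irrefl by auto
  also have "\<dots> \<le> mu S" using assms by (intro mu_mono) auto
  finally show ?thesis .
qed

lemma io_step: assumes "x \<in> Q" "y \<in> Q" "lt x y" shows "io x + w x \<le> io y"
proof -
  have "{z\<in>Q. lt z x} \<subseteq> {z\<in>Q. lt z y}" using lt_trans assms by blast
  then have "mu {z\<in>Q. lt z x} + (1/2)^Suc (to_nat_on Q x) \<le> mu {z\<in>Q. lt z y}"
    using assms by (intro mu_lt_step) auto
  then show ?thesis unfolding io_def w_def add_divide_distrib[symmetric]
    by (rule divide_right_mono) (use W_pos in auto)
qed

lemma io_top: assumes "x \<in> Q" shows "io x + w x \<le> 1"
proof -
  have "mu {z\<in>Q. lt z x} + (1/2)^Suc (to_nat_on Q x) \<le> mu Q"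
    using assms by (intro mu_lt_step) auto
  then have "io x + w x \<le> mu Q / W" unfolding io_def w_def add_divide_distrib[symmetric]
    by (rule divide_right_mono) (use W_pos in auto)
  then show ?thesis using W_pos by (simp add: W_def)
qed

lemma Phi_range: assumes "x \<in> Q" "t \<in> {0..<1}" shows "Phi x t \<in> {0..<1}"
proof -
  have "t * w x < w x" using assms w_pos[of x] by simp
  moreover have "0 \<le> t * w x" using assms w_pos[of x] by simp
  ultimately show ?thesis using io_top[OF assms(1)] io_nonneg[of x] by (simp add: Phi_def)
qed

lemma Phi_less: assumes "x \<in> Q" "y \<in> Q" "t \<in> {0..<1}" "s \<in> {0..<1}" "lt x y"
  shows "Phi x t < Phi y s"
proof -
  have "t * w x < w x" using assms w_pos[of x] by simp
  moreover have "0 \<le> s * w y" using assms w_pos[of y] by simp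
  ultimately show ?thesis using io_step[OF assms(1,2,5)] by (simp add: Phi_def)
qed

lemma Phi_sgn: assumes "x \<in> Q" "y \<in> Q" "t \<in> {0..<1}" "s \<in> {0..<1}"
  shows "sgn (Phi y s - Phi x t) = (if x = y then sgn (s - t) else sig x y)"
proof (cases "x = y")
  case True
  then have "Phi y s - Phi x t = (s - t) * w x" by (simp add: Phi_def algebra_simps)
  then show ?thesis using True w_pos[of x] by (simp add: sgn_mult)
next
  case False
  then consider "lt x y" | "lt y x" using lt_total assms by blast
  then show ?thesis
  proof cases
    case 1 then show ?thesis using Phi_less[OF assms 1] False by (simp add: sig_def)
  next
    case 2
    then have "\<not> lt x y" using lt_asym assms by blast
    then show ?thesis using Phi_less[OF assms(2,1,4,3) 2] False by (simp add: sig_def)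
  qed
qed

definition CL :: "'a \<Rightarrow> real \<Rightarrow> 'a \<Rightarrow> real \<Rightarrow> 'a \<Rightarrow> real \<Rightarrow> real" where
  "CL x1 t1 x2 t2 x3 t3 = (if x1 = x2 \<and> x2 = x3 then cyc t1 t2 t3
     else if x1 = x2 then sgn (t2 - t1) else if x2 = x3 then sgn (t3 - t2)
     else if x1 = x3 then - sgn (t3 - t1) else of_int (c x1 x2 x3))"

lemma Phi_cyc:
  assumes "x1 \<in> Q" "x2 \<in> Q" "x3 \<in> Q" "t1 \<in> {0..<1}" "t2 \<in> {0..<1}" "t3 \<in> {0..<1}"
  shows "cyc (Phi x1 t1) (Phi x2 t2) (Phi x3 t3) = CL x1 t1 x2 t2 x3 t3"
proof -
  have "cyc (Phi x1 t1) (Phi x2 t2) (Phi x3 t3) =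
      (if x1 = x2 then sgn (t2 - t1) else sig x1 x2) * (if x2 = x3 then sgn (t3 - t2) else sig x2 x3)
      * (if x1 = x3 then sgn (t3 - t1) else sig x1 x3)"
    unfolding cyc_def using Phi_sgn assms by presburger
  also have "\<dots> = CL x1 t1 x2 t2 x3 t3"
  proof -
    have A: "sig x1 x2 * sig x2 x3 * sig x1 x3 = of_int (c x1 x2 x3)" using lemmaA assms by blast
    show ?thesis unfolding CL_def using sig_sq[of x1 x3] sig_sq[of x1 x2] sig_anti[of x1 x2] assms A
      by (auto simp: cyc_def mult.assoc)
  qed
  finally show ?thesis .
qed

definition DD :: "real set" where "DD = (\<lambda>(x, t). Phi x t) ` (Q \<times> {0..<1})"

lemma DD_sub: "DD \<subseteq> {0..<1}" using Phi_range by (auto simp: DD_def)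

lemma DD_0: "0 \<in> DD"
proof -
  have e: "{y\<in>Q. lt y q0} = {}" by (auto simp: lt_def)
  have "io q0 = 0" unfolding io_def e mu_empty by simp
  then have "Phi q0 0 = 0" by (simp add: Phi_def)
  then show ?thesis unfolding DD_def using q0Q by (intro image_eqI[of _ _ "(q0, 0)"]) auto
qed

lemma Phi_inj: assumes "x \<in> Q" "y \<in> Q" "t \<in> {0..<1}" "s \<in> {0..<1}" "Phi x t = Phi y s"
  shows "x = y \<and> t = s"
proof -
  have "sgn (Phi y s - Phi x t) = 0" using assms by simp
  then have "(if x = y then sgn (s - t) else sig x y) = 0" using Phi_sgn[OF assms(1-4)] by simp
  then show ?thesis by (auto simp: sig_def sgn_if split: if_splits)
qed

end


context cord begin

lemma exists_max_io:
  assumes "finite F" "F \<noteq> {}"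
  shows "\<exists>m\<in>F. \<forall>y\<in>F. io y \<le> io m"
proof -
  have "Max (io ` F) \<in> io ` F" using assms by (intro Max_in) auto
  then obtain m where "m \<in> F" "io m = Max (io ` F)" by auto
  then show ?thesis using assms by (intro bexI[of _ m]) auto
qed

lemma exists_min_io:
  assumes "finite F" "F \<noteq> {}"
  shows "\<exists>m\<in>F. \<forall>y\<in>F. io m \<le> io y"
proof -
  have "Min (io ` F) \<in> io ` F" using assms by (intro Min_in) auto
  then obtain m where "m \<in> F" "io m = Min (io ` F)" by auto
  then show ?thesis using assms by (intro bexI[of _ m]) auto
qed

lemma io_lt: "x \<in> Q \<Longrightarrow> y \<in> Q \<Longrightarrow> lt x y \<Longrightarrow> io x < io y"
  using io_step[of x y] w_pos[of x] by simp

lemma DD_dense: "dense01 DD"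
  unfolding dense01_def
proof (intro allI impI)
  fix a b :: real assume ab: "0 \<le> a \<and> a < b \<and> b \<le> 1"
  show "\<exists>d\<in>DD. a < d \<and> d < b"
  proof (rule ccontr)
    assume "\<not> (\<exists>d\<in>DD. a < d \<and> d < b)"
    then have H: "\<not> (a < Phi x t \<and> Phi x t < b)" if "x \<in> Q" "t \<in> {0..<1}" for x t
      using that unfolding DD_def by auto
    define L where "L = {x\<in>Q. io x + w x \<le> a}"
    define R where "R = Q - L"
    have LQ: "L \<subseteq> Q" and RQ: "R \<subseteq> Q" by (auto simp: L_def R_def)
    have Rb: "b \<le> io x" if x: "x \<in> R" for x
    proof (rule ccontr)
      assume "\<not> b \<le> io x"
      then have "io x < b" by simp
      have xQ: "x \<in> Q" using x by (simp add: R_def)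
      have "io x \<le> a"
      proof (rule ccontr)
        assume "\<not> io x \<le> a"
        then have "a < Phi x 0 \<and> Phi x 0 < b" using \<open>io x < b\<close> by (simp add: Phi_def)
        then show False using H[OF xQ] by simp
      qed
      have "a < io x + w x" using x by (auto simp: R_def L_def)
      define m where "m = min b (io x + w x)"
      define t where "t = ((a + m)/2 - io x) / w x"
      have wx: "0 < w x" by (rule w_pos)
      have am: "a < m" using ab \<open>a < io x + w x\<close> by (simp add: m_def)
      have "0 \<le> t" unfolding t_def using wx am \<open>io x \<le> a\<close> by (intro divide_nonneg_pos) auto
      moreover have "t < 1"
      proof -
        have "m \<le> io x + w x" by (simp add: m_def)
        moreover have "(a + m)/2 < m" using am by (simp add: field_simps)
        ultimately have "(a + m)/2 - io x < w x" by linarith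
        then show ?thesis unfolding t_def using wx by (simp add: divide_less_eq)
      qed
      moreover have "Phi x t = (a + m)/2" unfolding Phi_def t_def using wx by simp
      moreover have "m \<le> b" by (simp add: m_def)
      then have "a < (a + m)/2" "(a + m)/2 < b" using am by (simp_all add: field_simps)
      ultimately show False using H[OF xQ, of t] by simp
    qed
    have RL: "lt y x" if "x \<in> R" "y \<in> L" for x y
    proof -
      have xy: "x \<in> Q" "y \<in> Q" "x \<noteq> y" using that by (auto simp: R_def L_def)
      have "\<not> lt x y"
      proof
        assume "lt x y"
        then have "io x < io y" using io_lt xy by blast
        moreover have "io y + w y \<le> a" using that by (simp add: L_def)
        ultimately show False using Rb[OF that(1)] w_pos[of y] ab by simp
      qed
      then show ?thesis using lt_total xy by blast
    qed
    have muL: "mu L \<le> a * W"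
    proof (rule mu_bound_partial[OF LQ])
      fix M
      define F where "F = {x\<in>L. to_nat_on Q x < M}"
      have fF: "finite F" unfolding F_def by (rule finite_low[OF LQ])
      show "mu F \<le> a * W"
      proof (cases "F = {}")
        case True then show ?thesis using mu_empty ab W_pos by simp
      next
        case False
        obtain m where m: "m \<in> F" "\<forall>y\<in>F. io y \<le> io m" using exists_max_io[OF fF False] by blast
        have mQ: "m \<in> Q" "m \<in> L" using m LQ by (auto simp: F_def)
        have "F \<subseteq> {y\<in>Q. lt y m} \<union> {m}"
        proof
          fix y assume y: "y \<in> F"
          then have yQ: "y \<in> Q" using LQ by (auto simp: F_def)
          show "y \<in> {y\<in>Q. lt y m} \<union> {m}"
          proof (cases "y = m")
            case False
            have "\<not> lt m y" using io_lt[OF mQ(1) yQ] m y by force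
            then show ?thesis using lt_total[OF yQ mQ(1) False] yQ by auto
          qed simp
        qed
        then have "mu F \<le> mu ({y\<in>Q. lt y m} \<union> {m})" by (rule mu_mono)
        also have "\<dots> = mu {y\<in>Q. lt y m} + mu {m}"
          using mQ lt_irrefl by (intro mu_union) auto
        also have "\<dots> = (io m + w m) * W"
          using W_pos by (simp add: io_def w_def mu_single distrib_right)
        also have "\<dots> \<le> a * W" using mQ W_pos by (intro mult_right_mono) (auto simp: L_def)
        finally show ?thesis .
      qed
    qed
    have "R \<noteq> {}"
    proof
      assume "R = {}"
      then have "L = Q" using LQ by (auto simp: R_def)
      then have "W \<le> a * W" using muL by (simp add: W_def)
      then have "1 \<le> a" using W_pos by simp
      then show False using ab by simp
    qed
    obtain N where N: "(1/2::real)^N < (b - a) * W"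
      using real_arch_pow_inv[of "(b - a) * W" "1/2"] ab W_pos by auto
    obtain m where m: "m \<in> R" "\<forall>y\<in>R. lt y m \<longrightarrow> N \<le> to_nat_on Q y"
    proof (cases "{x\<in>R. to_nat_on Q x < N} = {}")
      case True
      obtain x where "x \<in> R" using \<open>R \<noteq> {}\<close> by blast
      then show ?thesis using that True by force
    next
      case False
      obtain m where m: "m \<in> {x\<in>R. to_nat_on Q x < N}" "\<forall>y\<in>{x\<in>R. to_nat_on Q x < N}. io m \<le> io y"
        using exists_min_io[OF finite_low[OF RQ] False] by blast
      have "N \<le> to_nat_on Q y" if "y \<in> R" "lt y m" for y
      proof (rule ccontr)
        assume "\<not> N \<le> to_nat_on Q y"
        then have "io m \<le> io y" using m that by auto
        moreover have "io y < io m" using io_lt[OF _ _ that(2)] that m RQ by auto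
        ultimately show False by simp
      qed
      then show ?thesis using that m by blast
    qed
    have mQ: "m \<in> Q" using m RQ by auto
    define RM where "RM = {y\<in>R. lt y m}"
    have split: "{y\<in>Q. lt y m} = L \<union> RM"
      using RL[OF m(1)] by (auto simp: RM_def R_def L_def)
    have "io m * W = mu {y\<in>Q. lt y m}" using W_pos by (simp add: io_def)
    also have "\<dots> = mu L + mu RM" unfolding split
      by (intro mu_union) (auto simp: RM_def R_def L_def)
    also have "\<dots> \<le> a * W + (1/2)^N"
      using muL mu_tail[of RM N] m(2) by (auto simp: RM_def)
    also have "\<dots> < a * W + (b - a) * W" using N by simp
    also have "\<dots> = b * W" by (simp add: algebra_simps)
    finally have "io m < b" using W_pos by simp
    then show False using Rb[OF m(1)] by simp
  qed
qed

end


context cord begin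

definition Psi :: "real \<Rightarrow> 'a \<times> real" where
  "Psi = inv_into (Q \<times> {0..<1}) (\<lambda>(x, t). Phi x t)"
definition act :: "('a \<Rightarrow> 'a) \<Rightarrow> real \<Rightarrow> real" where
  "act g u = Phi (g (fst (Psi u))) (snd (Psi u))"

lemma Phi_inj_on: "inj_on (\<lambda>(x, t). Phi x t) (Q \<times> {0..<1})"
proof (rule inj_onI)
  fix p q assume p: "p \<in> Q \<times> {0..<1}" and q: "q \<in> Q \<times> {0..<1}"
    and eq: "(\<lambda>(x, t). Phi x t) p = (\<lambda>(x, t). Phi x t) q"
  obtain x t where pp: "p = (x, t)" by (cases p)
  obtain y s where qq: "q = (y, s)" by (cases q)
  have h: "x \<in> Q" "t \<in> {0..<1}" "y \<in> Q" "s \<in> {0..<1}" "Phi x t = Phi y s"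
    using p q eq pp qq by auto
  have "x = y \<and> t = s" by (rule Phi_inj[OF h(1) h(3) h(2) h(4) h(5)])
  then show "p = q" using pp qq by simp
qed

lemma Psi_Phi: "x \<in> Q \<Longrightarrow> t \<in> {0..<1} \<Longrightarrow> Psi (Phi x t) = (x, t)"
  unfolding Psi_def using inv_into_f_f[OF Phi_inj_on, of "(x, t)"] by simp

lemma act_Phi: "x \<in> Q \<Longrightarrow> t \<in> {0..<1} \<Longrightarrow> act g (Phi x t) = Phi (g x) t"
  by (simp add: act_def Psi_Phi)

lemma DD_elim: assumes "u \<in> DD" shows "\<exists>x t. x \<in> Q \<and> t \<in> {0..<1} \<and> u = Phi x t"
proof -
  obtain p where p: "p \<in> Q \<times> {0..<1}" "u = (\<lambda>(x, t). Phi x t) p" using assms unfolding DD_def by blast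
  obtain x t where "p = (x, t)" by (cases p)
  then have "x \<in> Q" "t \<in> {0..<1}" "u = Phi x t" using p by auto
  then show ?thesis by blast
qed

lemma DD_intro: "x \<in> Q \<Longrightarrow> t \<in> {0..<1} \<Longrightarrow> Phi x t \<in> DD"
  unfolding DD_def by force

lemma act_comp: assumes "\<forall>x\<in>Q. h x \<in> Q" "u \<in> DD" shows "act g (act h u) = act (g \<circ> h) u"
proof -
  obtain x t where "x \<in> Q" "t \<in> {0..<1}" "u = Phi x t" using DD_elim[OF assms(2)] by blast
  then show ?thesis using assms(1) act_Phi by simp
qed

lemma act_bij:
  assumes "bij_betw g Q Q" shows "bij_betw (act g) DD DD"
proof (rule bij_betw_byWitness[of _ "act (inv_into Q g)"])
  have gQ: "g x \<in> Q" if "x \<in> Q" for x using assms that by (auto simp: bij_betw_def)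
  have iQ: "inv_into Q g x \<in> Q" if "x \<in> Q" for x
  proof -
    have "x \<in> g ` Q" using assms that by (simp add: bij_betw_def)
    then show ?thesis by (rule inv_into_into)
  qed
  show "\<forall>a\<in>DD. act (inv_into Q g) (act g a) = a"
  proof
    fix a assume "a \<in> DD"
    then obtain x t where "x \<in> Q" "t \<in> {0..<1}" "a = Phi x t" using DD_elim by blast
    moreover have "inv_into Q g (g x) = x"
      using assms \<open>x \<in> Q\<close> by (intro inv_into_f_f) (auto simp: bij_betw_def)
    ultimately show "act (inv_into Q g) (act g a) = a"
      using gQ act_Phi by simp
  qed
  show "\<forall>a'\<in>DD. act g (act (inv_into Q g) a') = a'"
  proof
    fix a assume "a \<in> DD"
    then obtain x t where "x \<in> Q" "t \<in> {0..<1}" "a = Phi x t" using DD_elim by blast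
    moreover have "g (inv_into Q g x) = x"
      using assms \<open>x \<in> Q\<close> by (intro f_inv_into_f) (auto simp: bij_betw_def)
    ultimately show "act g (act (inv_into Q g) a) = a"
      using iQ act_Phi by simp
  qed
  show "act g ` DD \<subseteq> DD"
  proof
    fix b assume "b \<in> act g ` DD"
    then obtain a where a: "a \<in> DD" "b = act g a" by blast
    then obtain x t where "x \<in> Q" "t \<in> {0..<1}" "a = Phi x t" using DD_elim by blast
    then show "b \<in> DD" using a gQ act_Phi DD_intro by simp
  qed
  show "act (inv_into Q g) ` DD \<subseteq> DD"
  proof
    fix b assume "b \<in> act (inv_into Q g) ` DD"
    then obtain a where a: "a \<in> DD" "b = act (inv_into Q g) a" by blast
    then obtain x t where "x \<in> Q" "t \<in> {0..<1}" "a = Phi x t" using DD_elim by blast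
    then show "b \<in> DD" using a iQ act_Phi DD_intro by simp
  qed
qed

lemma act_cyc:
  assumes "bij_betw g Q Q" and cp: "\<forall>x1\<in>Q. \<forall>x2\<in>Q. \<forall>x3\<in>Q. c (g x1) (g x2) (g x3) = c x1 x2 x3"
  shows "cycpres (act g) DD"
  unfolding cycpres_def
proof (intro ballI)
  have gQ: "g x \<in> Q" if "x \<in> Q" for x using assms that by (auto simp: bij_betw_def)
  have gi: "g x = g y \<longleftrightarrow> x = y" if "x \<in> Q" "y \<in> Q" for x y
  proof -
    have "inj_on g Q" using assms by (simp add: bij_betw_def)
    then show ?thesis using that by (rule inj_on_eq_iff)
  qed
  fix a b d assume "a \<in> DD" "b \<in> DD" "d \<in> DD"
  note abd = this
  obtain x1 t1 where x1: "x1 \<in> Q" "t1 \<in> {0..<1}" "a = Phi x1 t1" using DD_elim[OF abd(1)] by blast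
  obtain x2 t2 where x2: "x2 \<in> Q" "t2 \<in> {0..<1}" "b = Phi x2 t2" using DD_elim[OF abd(2)] by blast
  obtain x3 t3 where x3: "x3 \<in> Q" "t3 \<in> {0..<1}" "d = Phi x3 t3" using DD_elim[OF abd(3)] by blast
  note x = x1 x2 x3
  have "cyc (act g a) (act g b) (act g d) = CL (g x1) t1 (g x2) t2 (g x3) t3"
    using x act_Phi Phi_cyc[of "g x1" "g x2" "g x3" t1 t2 t3] gQ by simp
  also have "\<dots> = CL x1 t1 x2 t2 x3 t3"
    unfolding CL_def using gi x cp by simp
  also have "\<dots> = cyc a b d" using x Phi_cyc[of x1 x2 x3 t1 t2 t3] by simp
  finally show "cyc (act g a) (act g b) (act g d) = cyc a b d" .
qed

end


definition Einv :: "complex \<Rightarrow> real" where "Einv = inv_into {0..<1} E"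
definition Fh :: "(real \<Rightarrow> real) \<Rightarrow> complex \<Rightarrow> complex" where
  "Fh f z = (if z \<in> S1 then E (f (Einv z)) else z)"

lemma Einv_range: "z \<in> S1 \<Longrightarrow> Einv z \<in> {0..<1}"
  unfolding Einv_def using E_surj by (metis inv_into_into)
lemma E_Einv: "z \<in> S1 \<Longrightarrow> E (Einv z) = z"
  unfolding Einv_def using E_surj by (metis f_inv_into_f)
lemma Einv_E: "t \<in> {0..<1} \<Longrightarrow> Einv (E t) = t"
  unfolding Einv_def using E_inj by (metis inv_into_f_f)

lemma fr: "bij_betw f {0..<1} {0..<1} \<Longrightarrow> t \<in> {0..<1} \<Longrightarrow> f t \<in> {0..<1}"
  by (auto simp: bij_betw_def)

lemma Fh_homeo:
  assumes b: "bij_betw f {0..<1} {0..<1}" and cp: "cycpres f {0..<1}"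
  shows "homeo_plus (Fh f)"
proof -
  have bS: "bij_betw (Fh f) S1 S1"
  proof (rule bij_betw_byWitness[of _ "Fh (inv_into {0..<1} f)"])
    have ir: "inv_into {0..<1} f t \<in> {0..<1}" if "t \<in> {0..<1}" for t
      using b that by (metis bij_betw_def inv_into_into)
    have fi: "f (inv_into {0..<1} f t) = t" if "t \<in> {0..<1}" for t
      using b that by (metis bij_betw_def f_inv_into_f)
    have if': "inv_into {0..<1} f (f t) = t" if "t \<in> {0..<1}" for t
      using b that by (metis bij_betw_def inv_into_f_f)
    show "\<forall>a\<in>S1. Fh (inv_into {0..<1} f) (Fh f a) = a"
      using E_S1 Einv_E E_Einv Einv_range fr[OF b] if' by (simp add: Fh_def)
    show "\<forall>a\<in>S1. Fh f (Fh (inv_into {0..<1} f) a) = a"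
      using E_S1 Einv_E E_Einv Einv_range ir fi by (simp add: Fh_def)
    show "Fh f ` S1 \<subseteq> S1" using E_S1 by (auto simp: Fh_def)
    show "Fh (inv_into {0..<1} f) ` S1 \<subseteq> S1" using E_S1 by (auto simp: Fh_def)
  qed
  have ori: "\<forall>a\<in>S1. \<forall>b\<in>S1. \<forall>c\<in>S1. circle_orient (Fh f a) (Fh f b) (Fh f c) = circle_orient a b c"
  proof (intro ballI)
    fix a b c assume abc: "a \<in> S1" "b \<in> S1" "c \<in> S1"
    have r: "Einv a \<in> {0..<1}" "Einv b \<in> {0..<1}" "Einv c \<in> {0..<1}" using abc Einv_range by auto
    have "circle_orient (Fh f a) (Fh f b) (Fh f c) = cyc (f (Einv a)) (f (Einv b)) (f (Einv c))"
      using abc r fr[OF b] orient_E by (simp add: Fh_def)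
    also have "\<dots> = cyc (Einv a) (Einv b) (Einv c)" using cp r by (simp add: cycpres_def)
    also have "\<dots> = circle_orient (E (Einv a)) (E (Einv b)) (E (Einv c))" using r orient_E by simp
    also have "\<dots> = circle_orient a b c" using abc E_Einv by simp
    finally show "circle_orient (Fh f a) (Fh f b) (Fh f c) = circle_orient a b c" .
  qed
  have "\<exists>g. homeomorphism S1 S1 (Fh f) g" by (rule orient_homeo[OF bS ori])
  moreover have "\<forall>x. x \<notin> S1 \<longrightarrow> Fh f x = x" by (simp add: Fh_def)
  ultimately show ?thesis unfolding homeo_plus_def using ori by blast
qed

lemma Fh_comp:
  assumes "\<forall>t\<in>{0..<1}. f2 t \<in> {0..<1}"
  shows "Fh f1 \<circ> Fh f2 = Fh (f1 \<circ> f2)"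
  using assms E_S1 Einv_E Einv_range by (auto simp: Fh_def fun_eq_iff)

lemma Fh_hinv:
  assumes b: "bij_betw f {0..<1} {0..<1}"
  shows "hinv (Fh f) = Fh (inv_into {0..<1} f)"
proof
  fix z
  show "hinv (Fh f) z = Fh (inv_into {0..<1} f) z"
  proof (cases "z \<in> S1")
    case False then show ?thesis by (simp add: hinv_def Fh_def)
  next
    case True
    have ir: "inv_into {0..<1} f (Einv z) \<in> {0..<1}"
      using b Einv_range[OF True] by (metis bij_betw_def inv_into_into)
    have fi: "f (inv_into {0..<1} f (Einv z)) = Einv z"
      using b Einv_range[OF True] by (metis bij_betw_def f_inv_into_f)
    define y where "y = E (inv_into {0..<1} f (Einv z))"
    have yS: "y \<in> S1" by (simp add: y_def E_S1)
    have "Fh f y = z" using yS ir fi True by (simp add: Fh_def y_def Einv_E E_Einv)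
    have inj: "inj_on (Fh f) S1"
    proof (rule inj_onI)
      fix p q assume p: "p \<in> S1" and q: "q \<in> S1" and eq: "Fh f p = Fh f q"
      then have "E (f (Einv p)) = E (f (Einv q))" by (simp add: Fh_def)
      then have "f (Einv p) = f (Einv q)"
        using E_inj fr[OF b] Einv_range p q by (meson inj_onD)
      then have "Einv p = Einv q" using b Einv_range p q by (meson bij_betw_def inj_onD)
      then show "p = q" using E_Einv p q by metis
    qed
    have "inv_into S1 (Fh f) z = y"
      using inv_into_f_f[OF inj yS] \<open>Fh f y = z\<close> by simp
    then show ?thesis using True by (simp add: hinv_def Fh_def y_def)
  qed
qed

lemma Fh_cong: "\<forall>u\<in>{0..<1}. f1 u = f2 u \<Longrightarrow> Fh f1 = Fh f2"
  using Einv_range by (auto simp: Fh_def fun_eq_iff)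

lemma Fh_inj: assumes "Fh f1 = Fh f2" "u \<in> {0..<1}"
  and "bij_betw f1 {0..<1} {0..<1}" "bij_betw f2 {0..<1} {0..<1}"
  shows "f1 u = f2 u"
proof -
  have "Fh f1 (E u) = Fh f2 (E u)" using assms by simp
  then have "E (f1 u) = E (f2 u)" using E_S1 Einv_E assms(2) by (simp add: Fh_def)
  then show ?thesis using E_inj fr assms by (meson inj_onD)
qed

lemma cycpres_comp: "cycpres f A \<Longrightarrow> cycpres g A \<Longrightarrow> \<forall>x\<in>A. g x \<in> A \<Longrightarrow> cycpres (f \<circ> g) A"
  by (simp add: cycpres_def)

lemma cycpres_inv: assumes "bij_betw f A A" "cycpres f A" shows "cycpres (inv_into A f) A"
  unfolding cycpres_def
proof (intro ballI)
  fix a b c assume abc: "a \<in> A" "b \<in> A" "c \<in> A"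
  have ir: "inv_into A f x \<in> A" if "x \<in> A" for x using assms that by (metis bij_betw_def inv_into_into)
  have fi: "f (inv_into A f x) = x" if "x \<in> A" for x using assms that by (metis bij_betw_def f_inv_into_f)
  have "cyc (f (inv_into A f a)) (f (inv_into A f b)) (f (inv_into A f c))
      = cyc (inv_into A f a) (inv_into A f b) (inv_into A f c)"
    using assms(2) ir abc by (simp add: cycpres_def)
  then show "cyc (inv_into A f a) (inv_into A f b) (inv_into A f c) = cyc a b c"
    using fi abc by simp
qed


lemma act_cong:
  assumes "cord Q c q0" "\<forall>x\<in>Q. g1 x = g2 x" "u \<in> cord.DD Q c q0"
  shows "cord.act Q c q0 g1 u = cord.act Q c q0 g2 u"
proof -
  interpret cord Q c q0 by fact
  obtain x t where "x \<in> Q" "t \<in> {0..<1}" "u = Phi x t" using DD_elim[OF assms(3)] by blast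
  then show ?thesis using assms(2) act_Phi by simp
qed

theorem lemma3p3:
  fixes Q :: "'a set" and op :: "'a \<Rightarrow> 'a \<Rightarrow> 'a" and c :: "'a \<Rightarrow> 'a \<Rightarrow> 'a \<Rightarrow> int"
  assumes "countable Q"
    and "quandle Q op"
    and "weak_latin Q op"
    and "circular_order Q op c"
  shows "\<exists>\<rho> :: 'a \<Rightarrow> (complex \<Rightarrow> complex).
           (\<forall>q\<in>Q. homeo_plus (\<rho> q)) \<and> inj_on \<rho> Q \<and>
           (\<forall>r\<in>Q. \<forall>s\<in>Q. \<rho> (op r s) = \<rho> s \<circ> \<rho> r \<circ> hinv (\<rho> s))"
proof (cases "Q = {}")
  case True
  then show ?thesis by auto
next
  case False
  then obtain q0 where q0: "q0 \<in> Q" by blast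
  note qd = assms(2)[unfolded quandle_def]
  note qa = qd[THEN conjunct1] qd[THEN conjunct2, THEN conjunct2, THEN conjunct1]
    qd[THEN conjunct2, THEN conjunct2, THEN conjunct2]
  note cd = assms(4)[unfolded circular_order_def]
  note co = cd[THEN conjunct1] cd[THEN conjunct2, THEN conjunct1]
    cd[THEN conjunct2, THEN conjunct2, THEN conjunct1] cd[THEN conjunct2, THEN conjunct2, THEN conjunct2]
  have cQ: "cord Q c q0" unfolding cord_def using assms(1) q0 co(1-3) by (intro conjI)
  interpret cord Q c q0 by (rule cQ)
  define Rs where "Rs s = (\<lambda>x. op x s)" for s
  have RQ: "\<forall>x\<in>Q. Rs s x \<in> Q" if "s \<in> Q" for s using qa(1) that by (simp add: Rs_def)
  have Rb: "bij_betw (Rs s) Q Q" if s: "s \<in> Q" for s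
    unfolding bij_betw_def
  proof
    show "inj_on (Rs s) Q"
    proof (rule inj_onI)
      fix x y assume "x \<in> Q" "y \<in> Q" "Rs s x = Rs s y"
      then show "x = y" using qa(2) qa(1) s by (simp add: Rs_def) (metis)
    qed
    show "Rs s ` Q = Q"
    proof
      show "Rs s ` Q \<subseteq> Q" using RQ[OF s] by auto
      show "Q \<subseteq> Rs s ` Q"
      proof
        fix q assume "q \<in> Q"
        then obtain r where "r \<in> Q" "op r s = q" using qa(2) s by blast
        then show "q \<in> Rs s ` Q" by (auto simp: Rs_def)
      qed
    qed
  qed
  have Rc: "\<forall>x1\<in>Q. \<forall>x2\<in>Q. \<forall>x3\<in>Q. c (Rs s x1) (Rs s x2) (Rs s x3) = c x1 x2 x3" if "s \<in> Q" for s
    using co(4) that by (simp add: Rs_def)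
  define P where "P s f \<longleftrightarrow> bij_betw f {0..<1} {0..<1} \<and> cycpres f {0..<1} \<and> (\<forall>d\<in>DD. f d = act (Rs s) d)"
    for s f
  define fS where "fS s = (SOME f. P s f)" for s
  have fS: "P s (fS s)" if s: "s \<in> Q" for s
  proof -
    have "\<exists>f. P s f" unfolding P_def
      by (rule circ_ext[OF DD_sub DD_0 DD_dense act_bij[OF Rb[OF s]] act_cyc[OF Rb[OF s] Rc[OF s]]])
    then show ?thesis unfolding fS_def by (rule someI_ex)
  qed
  have fSb: "bij_betw (fS s) {0..<1} {0..<1}" and fSc: "cycpres (fS s) {0..<1}"
    and fSe: "\<forall>d\<in>DD. fS s d = act (Rs s) d" if "s \<in> Q" for s
    using fS[OF that] by (simp_all add: P_def)
  define \<rho> where "\<rho> s = Fh (fS s)" for s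
  have hom: "\<rho> (op r s) = \<rho> s \<circ> \<rho> r \<circ> hinv (\<rho> s)" if r: "r \<in> Q" and s: "s \<in> Q" for r s
  proof -
    define fi where "fi = inv_into {0..<1} (fS s)"
    have rs: "op r s \<in> Q" using qa(1) r s by blast
    have fib: "bij_betw fi {0..<1} {0..<1}" unfolding fi_def by (rule bij_betw_inv_into[OF fSb[OF s]])
    have fir: "\<forall>t\<in>{0..<1}. fi t \<in> {0..<1}" using fib by (auto simp: bij_betw_def)
    have frr: "\<forall>t\<in>{0..<1}. fS r t \<in> {0..<1}" using fSb[OF r] by (auto simp: bij_betw_def)
    define F where "F = fS s \<circ> fS r \<circ> fi"
    have "\<rho> s \<circ> \<rho> r \<circ> hinv (\<rho> s) = Fh (fS s) \<circ> Fh (fS r) \<circ> Fh fi"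
      unfolding \<rho>_def fi_def using Fh_hinv[OF fSb[OF s]] by simp
    also have "\<dots> = Fh F" unfolding F_def
      using Fh_comp[OF frr, of "fS s"] Fh_comp[of fi "fS s \<circ> fS r"] fir frr
      by (simp add: comp_assoc)
    finally have eq1: "\<rho> s \<circ> \<rho> r \<circ> hinv (\<rho> s) = Fh F" .
    have Fb: "bij_betw F {0..<1} {0..<1}" unfolding F_def
      by (rule bij_betw_trans[OF fib bij_betw_trans[OF fSb[OF r] fSb[OF s]]])
    have fic: "cycpres fi {0..<1}" unfolding fi_def by (rule cycpres_inv[OF fSb[OF s] fSc[OF s]])
    have Fc: "cycpres F {0..<1}" unfolding F_def
      by (rule cycpres_comp[OF cycpres_comp[OF fSc[OF s] fSc[OF r] frr] fic fir])
    have agree: "\<forall>d\<in>DD. fS (op r s) d = F d"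
    proof
      fix d assume d: "d \<in> DD"
      have "act (Rs s) ` DD = DD" using act_bij[OF Rb[OF s]] by (simp add: bij_betw_def)
      then obtain d' where d': "d' \<in> DD" "d = act (Rs s) d'" using d by blast
      have d'r: "d' \<in> {0..<1}" using d' DD_sub by auto
      have "fS s d' = d" using fSe[OF s] d' by simp
      then have "fi d = d'" unfolding fi_def using fSb[OF s] d'r
        by (metis bij_betw_def inv_into_f_f)
      have ar: "act (Rs r) d' \<in> DD" using act_bij[OF Rb[OF r]] d' by (auto simp: bij_betw_def)
      have "F d = fS s (fS r d')" using \<open>fi d = d'\<close> by (simp add: F_def)
      also have "\<dots> = act (Rs s) (act (Rs r) d')" using fSe r s d' ar by simp
      also have "\<dots> = act (Rs s \<circ> Rs r) d'" using act_comp[OF RQ[OF r] d'(1)] by simp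
      also have "\<dots> = act (Rs (op r s) \<circ> Rs s) d'"
        using act_cong[OF cQ _ d'(1), of "Rs s \<circ> Rs r" "Rs (op r s) \<circ> Rs s"] qa(3) r s
        by (simp add: Rs_def)
      also have "\<dots> = act (Rs (op r s)) d" using act_comp[OF RQ[OF s] d'(1)] d' by simp
      also have "\<dots> = fS (op r s) d" using fSe[OF rs] d by simp
      finally show "fS (op r s) d = F d" by simp
    qed
    have im: "fS (op r s) ` DD = DD"
    proof -
      have "fS (op r s) ` DD = act (Rs (op r s)) ` DD" using fSe[OF rs] by (intro image_cong) auto
      also have "\<dots> = DD" using act_bij[OF Rb[OF rs]] by (simp add: bij_betw_def)
      finally show ?thesis .
    qed
    have "\<forall>u\<in>{0..<1}. fS (op r s) u = F u"
      using circ_unique[OF DD_sub DD_dense fSb[OF rs] Fb fSc[OF rs] Fc agree im] by blast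
    then have "\<rho> (op r s) = Fh F" unfolding \<rho>_def by (rule Fh_cong)
    then show ?thesis using eq1 by simp
  qed
  have inj: "inj_on \<rho> Q"
  proof (rule inj_onI)
    fix r s assume r: "r \<in> Q" and s: "s \<in> Q" and eq: "\<rho> r = \<rho> s"
    have "op x r = op x s" if x: "x \<in> Q" for x
    proof -
      have p: "Phi x 0 \<in> DD" using DD_intro x by simp
      have "fS r (Phi x 0) = fS s (Phi x 0)"
        using Fh_inj[of "fS r" "fS s"] eq fSb r s DD_sub p unfolding \<rho>_def by blast
      then have "Phi (op x r) 0 = Phi (op x s) 0"
        using fSe r s p act_Phi x by (simp add: Rs_def)
      moreover have xr: "op x r \<in> Q" and xs: "op x s \<in> Q" using qa(1) x r s by auto
      moreover have "(0::real) \<in> {0..<1}" by simp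
      ultimately show ?thesis using Phi_inj[OF xr xs] by blast
    qed
    moreover obtain qh where "qh \<in> Q" "op qh r = op qh s \<longrightarrow> r = s"
      using assms(3) r s unfolding weak_latin_def by blast
    ultimately show "r = s" by blast
  qed
  have "\<forall>q\<in>Q. homeo_plus (\<rho> q)" unfolding \<rho>_def using Fh_homeo fSb fSc by blast
  then show ?thesis using inj hom by blast
qed


end
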